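(* Let $R$ and $S$ be commutative rings with identity, $f:R\to S$ a ring homomorphism, and $J$ a nonzero proper ideal of $S$. Suppose $R$ is compactly packed. Then for any family $\{\mathfrak{p}_\alpha\}_{\alpha\in\Lambda}$ of prime ideals of $R$, the subset $\{\mathfrak{p}_\alpha^{\prime_f}\}_{\alpha\in\Lambda}$ of $\operatorname{Spec}(R\bowtie^f J)$ is compactly packed.
   Context: $R\bowtie^f J:=\{(r,f(r)+j)\mid r\in R,\ j\in J\}$, a subring of $R\times S$. For a prime ideal $\mathfrak{p}$ of $R$, $\mathfrak{p}^{\prime_f}:=\{(p,f(p)+j)\mid p\in\mathfrak{p},\ j\in J\}$, which is a prime ideal of $R\bowtie^f J$. For a commutative ring $A$, a subset $X\subseteq\operatorname{Spec}(A)$ is compactly packed if whenever an ideal $I$ of $A$ is contained in the union of a family $\{\mathfrak{p}_i\}_i$ of elements of $X$, then $I\subseteq\mathfrak{p}_i$ for some $i$; $A$ is compactly packed if $\operatorname{Spec}(A)$ is compactly packed. *)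

theory Defs
  imports "HOL-Algebra.Algebra"
begin

definition amalgamation ::
  "('a, 'm) ring_scheme \<Rightarrow> ('b, 'n) ring_scheme \<Rightarrow> ('a \<Rightarrow> 'b) \<Rightarrow> 'b set \<Rightarrow> ('a \<times> 'b) ring"
  where "amalgamation R S f J =
    (RDirProd R S)\<lparr>carrier := {(r, f r \<oplus>\<^bsub>S\<^esub> j) | r j. r \<in> carrier R \<and> j \<in> J}\<rparr>"

definition amalg_prime ::
  "('b, 'n) ring_scheme \<Rightarrow> ('a \<Rightarrow> 'b) \<Rightarrow> 'b set \<Rightarrow> 'a set \<Rightarrow> ('a \<times> 'b) set"
  where "amalg_prime S f J P = {(p, f p \<oplus>\<^bsub>S\<^esub> j) | p j. p \<in> P \<and> j \<in> J}"

definition Spec :: "('a, 'm) ring_scheme \<Rightarrow> 'a set set"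
  where "Spec A = {P. primeideal P A}"

definition compactly_packed_subset :: "('a, 'm) ring_scheme \<Rightarrow> 'a set set \<Rightarrow> bool"
  where "compactly_packed_subset A Xs \<longleftrightarrow>
    Xs \<subseteq> Spec A \<and>
    (\<forall>I Fam. ideal I A \<longrightarrow> Fam \<subseteq> Xs \<longrightarrow> I \<subseteq> Union Fam \<longrightarrow> (\<exists>Q\<in>Fam. I \<subseteq> Q))"

definition compactly_packed :: "('a, 'm) ring_scheme \<Rightarrow> bool"
  where "compactly_packed A \<longleftrightarrow> compactly_packed_subset A (Spec A)"

end

theory Submission
  imports Defs
begin

lemma RDP_ops:
  "(a, b) \<otimes>\<^bsub>RDirProd R S\<^esub> (c, d) = (a \<otimes>\<^bsub>R\<^esub> c, b \<otimes>\<^bsub>S\<^esub> d)"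
  "(a, b) \<oplus>\<^bsub>RDirProd R S\<^esub> (c, d) = (a \<oplus>\<^bsub>R\<^esub> c, b \<oplus>\<^bsub>S\<^esub> d)"
  "\<one>\<^bsub>RDirProd R S\<^esub> = (\<one>\<^bsub>R\<^esub>, \<one>\<^bsub>S\<^esub>)"
  "\<zero>\<^bsub>RDirProd R S\<^esub> = (\<zero>\<^bsub>R\<^esub>, \<zero>\<^bsub>S\<^esub>)"
  by (simp_all add: RDirProd_def DirProd_def monoid.defs)

lemma RDP_ring_cring:
  assumes "cring R" "cring S" shows "ring (RDirProd R S)"
  by (rule RDirProd_ring[OF cring.axioms(1)[OF assms(1)] cring.axioms(1)[OF assms(2)]])

lemma RDP_neg:
  assumes "cring R" "cring S" "a \<in> carrier R" "b \<in> carrier S"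
  shows "\<ominus>\<^bsub>RDirProd R S\<^esub> (a, b) = (\<ominus>\<^bsub>R\<^esub> a, \<ominus>\<^bsub>S\<^esub> b)"
proof -
  interpret P: ring "RDirProd R S" using RDP_ring_cring[OF assms(1,2)] .
  interpret R: cring R by fact
  interpret S: cring S by fact
  show ?thesis
    apply (rule P.minus_equality)
    using assms by (simp_all add: RDP_ops RDirProd_carrier R.l_neg S.l_neg)
qed

lemma amalg_cring:
  assumes R: "cring R" and S: "cring S" and f: "f \<in> ring_hom R S" and J: "ideal J S"
  shows "cring (amalgamation R S f J)"
proof -
  interpret P: ring "RDirProd R S" using RDP_ring_cring[OF assms(1,2)] .
  interpret R: cring R by fact
  interpret S: cring S by fact
  interpret J: ideal J S by fact
  interpret h: ring_hom_ring R S f using f R.ring_axioms S.ring_axioms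
    by (simp add: ring_hom_ringI2)
  let ?H = "{(r, f r \<oplus>\<^bsub>S\<^esub> j) | r j. r \<in> carrier R \<and> j \<in> J}"
  have sub: "?H \<subseteq> carrier (RDirProd R S)"
    by (auto simp: RDirProd_carrier)
  have "subcring ?H (RDirProd R S)"
  proof (rule subcring.intro)
    show "subring ?H (RDirProd R S)"
    proof (rule P.subringI[OF sub])
      show "\<one>\<^bsub>RDirProd R S\<^esub> \<in> ?H"
        unfolding RDP_ops
        by (rule CollectI, rule exI[of _ "\<one>\<^bsub>R\<^esub>"], rule exI[of _ "\<zero>\<^bsub>S\<^esub>"]) auto
    next
      fix h assume "h \<in> ?H"
      then obtain r j where h: "h = (r, f r \<oplus>\<^bsub>S\<^esub> j)" "r \<in> carrier R" "j \<in> J" by blast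
      have jc: "j \<in> carrier S" using h J.a_subset by auto
      have "\<ominus>\<^bsub>RDirProd R S\<^esub> h = (\<ominus>\<^bsub>R\<^esub> r, f (\<ominus>\<^bsub>R\<^esub> r) \<oplus>\<^bsub>S\<^esub> (\<ominus>\<^bsub>S\<^esub> j))"
        using h jc by (simp add: RDP_neg[OF R S] S.minus_add)
      moreover have "\<ominus>\<^bsub>S\<^esub> j \<in> J" using h by (simp add: J.a_inv_closed)
      ultimately show "\<ominus>\<^bsub>RDirProd R S\<^esub> h \<in> ?H" using h by blast
    next
      fix h1 h2 assume "h1 \<in> ?H" "h2 \<in> ?H"
      then obtain r j s k where h: "h1 = (r, f r \<oplus>\<^bsub>S\<^esub> j)" "r \<in> carrier R" "j \<in> J"
        "h2 = (s, f s \<oplus>\<^bsub>S\<^esub> k)" "s \<in> carrier R" "k \<in> J" by blast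
      have jc: "j \<in> carrier S" "k \<in> carrier S" using h J.a_subset by auto
      have fr: "f r \<in> carrier S" "f s \<in> carrier S" using h by auto
      have e1: "h1 \<otimes>\<^bsub>RDirProd R S\<^esub> h2 = (r \<otimes>\<^bsub>R\<^esub> s,
          f (r \<otimes>\<^bsub>R\<^esub> s) \<oplus>\<^bsub>S\<^esub> ((j \<otimes>\<^bsub>S\<^esub> f s \<oplus>\<^bsub>S\<^esub> f r \<otimes>\<^bsub>S\<^esub> k) \<oplus>\<^bsub>S\<^esub> j \<otimes>\<^bsub>S\<^esub> k))"
      proof -
        have "(f r \<oplus>\<^bsub>S\<^esub> j) \<otimes>\<^bsub>S\<^esub> (f s \<oplus>\<^bsub>S\<^esub> k) = f r \<otimes>\<^bsub>S\<^esub> f s \<oplus>\<^bsub>S\<^esub> ((j \<otimes>\<^bsub>S\<^esub> f s \<oplus>\<^bsub>S\<^esub> f r \<otimes>\<^bsub>S\<^esub> k) \<oplus>\<^bsub>S\<^esub> j \<otimes>\<^bsub>S\<^esub> k)"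
          using jc fr by (simp only: S.l_distr S.r_distr S.a_assoc S.m_closed S.add.m_closed)
        then show ?thesis using h by (simp add: RDP_ops)
      qed
      have "(j \<otimes>\<^bsub>S\<^esub> f s \<oplus>\<^bsub>S\<^esub> f r \<otimes>\<^bsub>S\<^esub> k) \<oplus>\<^bsub>S\<^esub> j \<otimes>\<^bsub>S\<^esub> k \<in> J"
        using h jc fr by (intro J.a_closed J.I_l_closed J.I_r_closed) auto
      then show "h1 \<otimes>\<^bsub>RDirProd R S\<^esub> h2 \<in> ?H" using e1 h by blast
      have e2: "h1 \<oplus>\<^bsub>RDirProd R S\<^esub> h2 = (r \<oplus>\<^bsub>R\<^esub> s, f (r \<oplus>\<^bsub>R\<^esub> s) \<oplus>\<^bsub>S\<^esub> (j \<oplus>\<^bsub>S\<^esub> k))"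
      proof -
        have "f r \<oplus>\<^bsub>S\<^esub> j \<oplus>\<^bsub>S\<^esub> (f s \<oplus>\<^bsub>S\<^esub> k) = f r \<oplus>\<^bsub>S\<^esub> f s \<oplus>\<^bsub>S\<^esub> (j \<oplus>\<^bsub>S\<^esub> k)"
          using jc fr by (simp only: S.a_assoc S.a_lcomm[of j] S.add.m_closed)
        then show ?thesis using h by (simp add: RDP_ops)
      qed
      have "j \<oplus>\<^bsub>S\<^esub> k \<in> J" using h by (simp add: J.a_closed)
      then show "h1 \<oplus>\<^bsub>RDirProd R S\<^esub> h2 \<in> ?H" using e2 h by blast
    qed
  next
    show "subcring_axioms ?H (RDirProd R S)"
      unfolding subcring_axioms_def
    proof (intro allI impI)
      fix h1 h2 assume a: "h1 \<in> ?H" "h2 \<in> ?H"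
      obtain a1 b1 a2 b2 where e: "h1 = (a1, b1)" "h2 = (a2, b2)" by fastforce
      have "a1 \<in> carrier R" "a2 \<in> carrier R" "b1 \<in> carrier S" "b2 \<in> carrier S"
        using a sub e by (auto simp: RDirProd_carrier)
      then show "h1 \<otimes>\<^bsub>RDirProd R S\<^esub> h2 = h2 \<otimes>\<^bsub>RDirProd R S\<^esub> h1"
        using e by (simp add: RDP_ops R.m_comm S.m_comm)
    qed
  qed
  then show ?thesis
    using P.subcring_iff[OF sub] unfolding amalgamation_def by blast
qed


lemma amalg_simps:
  "carrier (amalgamation R S f J) = {(r, f r \<oplus>\<^bsub>S\<^esub> j) | r j. r \<in> carrier R \<and> j \<in> J}"
  "(a, b) \<otimes>\<^bsub>amalgamation R S f J\<^esub> (c, d) = (a \<otimes>\<^bsub>R\<^esub> c, b \<otimes>\<^bsub>S\<^esub> d)"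
  "(a, b) \<oplus>\<^bsub>amalgamation R S f J\<^esub> (c, d) = (a \<oplus>\<^bsub>R\<^esub> c, b \<oplus>\<^bsub>S\<^esub> d)"
  "\<one>\<^bsub>amalgamation R S f J\<^esub> = (\<one>\<^bsub>R\<^esub>, \<one>\<^bsub>S\<^esub>)"
  by (simp_all add: amalgamation_def RDP_ops)

lemma fst_hom:
  assumes R: "cring R" and S: "cring S" and f: "f \<in> ring_hom R S" and J: "ideal J S"
  shows "ring_hom_ring (amalgamation R S f J) R fst"
proof -
  interpret A: cring "amalgamation R S f J" using amalg_cring[OF R S f J] .
  interpret R: cring R by fact
  have "fst \<in> ring_hom (amalgamation R S f J) R"
  proof (rule ring_hom_memI)
    fix x assume "x \<in> carrier (amalgamation R S f J)"
    then show "fst x \<in> carrier R" unfolding amalg_simps by auto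
  next
    fix x y assume x: "x \<in> carrier (amalgamation R S f J)" and y: "y \<in> carrier (amalgamation R S f J)"
    obtain a b c d where e: "x = (a, b)" "y = (c, d)" by fastforce
    show "fst (x \<otimes>\<^bsub>amalgamation R S f J\<^esub> y) = fst x \<otimes>\<^bsub>R\<^esub> fst y"
      unfolding e amalg_simps by simp
    show "fst (x \<oplus>\<^bsub>amalgamation R S f J\<^esub> y) = fst x \<oplus>\<^bsub>R\<^esub> fst y"
      unfolding e amalg_simps by simp
  next
    show "fst \<one>\<^bsub>amalgamation R S f J\<^esub> = \<one>\<^bsub>R\<^esub>" unfolding amalg_simps by simp
  qed
  then show ?thesis
    using ring_hom_ringI2[OF A.ring_axioms R.ring_axioms] by blast
qed

lemma surj_image_ideal:
  assumes h: "ring_hom_ring A B g" and I: "ideal I A" and sj: "g ` carrier A = carrier B"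
  shows "ideal (g ` I) B"
proof -
  interpret h: ring_hom_ring A B g by fact
  interpret I: ideal I A by fact
  have sub: "g ` I \<subseteq> carrier B" using I.a_subset sj by blast
  show ?thesis
  proof (rule idealI)
    show "ring B" by (rule h.S.ring_axioms)
    show "subgroup (g ` I) (add_monoid B)"
    proof (rule h.S.add.subgroupI)
      show "g ` I \<subseteq> carrier B" using sub by simp
      show "g ` I \<noteq> {}" using I.zero_closed by blast
    next
      fix a assume "a \<in> g ` I"
      then obtain i where i: "i \<in> I" "a = g i" by blast
      have "\<ominus>\<^bsub>A\<^esub> i \<in> I" using i by (simp add: I.a_inv_closed)
      moreover have "g (\<ominus>\<^bsub>A\<^esub> i) = \<ominus>\<^bsub>B\<^esub> a" using i I.a_subset by auto
      ultimately show "\<ominus>\<^bsub>B\<^esub> a \<in> g ` I" by (metis image_eqI)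
    next
      fix a b assume "a \<in> g ` I" "b \<in> g ` I"
      then obtain i k where i: "i \<in> I" "a = g i" "k \<in> I" "b = g k" by blast
      have "i \<oplus>\<^bsub>A\<^esub> k \<in> I" using i by (simp add: I.a_closed)
      moreover have "g (i \<oplus>\<^bsub>A\<^esub> k) = a \<oplus>\<^bsub>B\<^esub> b" using i I.a_subset by auto
      ultimately show "a \<oplus>\<^bsub>B\<^esub> b \<in> g ` I" by (metis image_eqI)
    qed
  next
    fix a x assume a: "a \<in> g ` I" and x: "x \<in> carrier B"
    then obtain i y where i: "i \<in> I" "a = g i" "y \<in> carrier A" "x = g y" using sj by blast
    have "y \<otimes>\<^bsub>A\<^esub> i \<in> I" "i \<otimes>\<^bsub>A\<^esub> y \<in> I" using i by (simp_all add: I.I_l_closed I.I_r_closed)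
    moreover have "g (y \<otimes>\<^bsub>A\<^esub> i) = x \<otimes>\<^bsub>B\<^esub> a" "g (i \<otimes>\<^bsub>A\<^esub> y) = a \<otimes>\<^bsub>B\<^esub> x"
      using i I.a_subset by auto
    ultimately show "x \<otimes>\<^bsub>B\<^esub> a \<in> g ` I" "a \<otimes>\<^bsub>B\<^esub> x \<in> g ` I" by (metis image_eqI)+
  qed
qed


lemma amalg_prime_eq:
  assumes "P \<subseteq> carrier R"
  shows "amalg_prime S f J P = {x \<in> carrier (amalgamation R S f J). fst x \<in> P}"
  using assms unfolding amalg_prime_def amalg_simps by auto

theorem proposition4p3:
  fixes R :: "('a, 'm) ring_scheme" and S :: "('b, 'n) ring_scheme"
    and f :: "'a \<Rightarrow> 'b" and J :: "'b set"
    and \<Lambda> :: "'i set" and p :: "'i \<Rightarrow> 'a set"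
  assumes "cring R" and "cring S"
    and "f \<in> ring_hom R S"
    and "ideal J S" and "J \<noteq> {\<zero>\<^bsub>S\<^esub>}" and "J \<noteq> carrier S"
    and "compactly_packed R"
    and "\<And>\<alpha>. \<alpha> \<in> \<Lambda> \<Longrightarrow> primeideal (p \<alpha>) R"
  shows "compactly_packed_subset (amalgamation R S f J)
           ((\<lambda>\<alpha>. amalg_prime S f J (p \<alpha>)) ` \<Lambda>)"
proof -
  let ?A = "amalgamation R S f J"
  have Acr: "cring ?A" using amalg_cring assms(1-4) by blast
  have fh: "ring_hom_ring ?A R fst" using fst_hom assms(1-4) by blast
  interpret R: cring R by fact
  interpret S: cring S by fact
  interpret J: ideal J S by fact
  interpret h: ring_hom_ring R S f using assms(3) R.ring_axioms S.ring_axioms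
    by (simp add: ring_hom_ringI2)
  have psub: "p \<alpha> \<subseteq> carrier R" if "\<alpha> \<in> \<Lambda>" for \<alpha>
    using additive_subgroup.a_subset[OF ideal.axioms(1)[OF primeideal.axioms(1)[OF assms(8)[OF that]]]] .
  have eq: "amalg_prime S f J (p \<alpha>) = {x \<in> carrier ?A. fst x \<in> p \<alpha>}" if "\<alpha> \<in> \<Lambda>" for \<alpha>
    using amalg_prime_eq[OF psub[OF that]] by blast
  have part1: "(\<lambda>\<alpha>. amalg_prime S f J (p \<alpha>)) ` \<Lambda> \<subseteq> Spec ?A"
  proof
    fix Q assume "Q \<in> (\<lambda>\<alpha>. amalg_prime S f J (p \<alpha>)) ` \<Lambda>"
    then obtain \<alpha> where a: "\<alpha> \<in> \<Lambda>" "Q = amalg_prime S f J (p \<alpha>)" by blast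
    have "primeideal {x \<in> carrier ?A. fst x \<in> p \<alpha>} ?A"
      using ring_hom_ring.primeideal_vimage[OF fh Acr assms(8)[OF a(1)]] .
    then show "Q \<in> Spec ?A" unfolding Spec_def using eq[OF a(1)] a(2) by simp
  qed
  have sj: "fst ` carrier ?A = carrier R"
  proof
    show "fst ` carrier ?A \<subseteq> carrier R" unfolding amalg_simps by auto
    show "carrier R \<subseteq> fst ` carrier ?A"
    proof
      fix r assume r: "r \<in> carrier R"
      then have "(r, f r \<oplus>\<^bsub>S\<^esub> \<zero>\<^bsub>S\<^esub>) \<in> carrier ?A" unfolding amalg_simps
        using J.zero_closed by blast
      then show "r \<in> fst ` carrier ?A" by force
    qed
  qed
  have cpR: "compactly_packed_subset R (Spec R)" using assms(7) unfolding compactly_packed_def .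
  show ?thesis
    unfolding compactly_packed_subset_def
  proof (intro conjI part1 allI impI)
    fix I Fam
    assume I: "ideal I ?A" and F: "Fam \<subseteq> (\<lambda>\<alpha>. amalg_prime S f J (p \<alpha>)) ` \<Lambda>"
      and U: "I \<subseteq> \<Union> Fam"
    have Isub: "I \<subseteq> carrier ?A" using additive_subgroup.a_subset[OF ideal.axioms(1)[OF I]] .
    define Fam' where "Fam' = {p \<alpha> | \<alpha>. \<alpha> \<in> \<Lambda> \<and> amalg_prime S f J (p \<alpha>) \<in> Fam}"
    have I0: "ideal (fst ` I) R" using surj_image_ideal[OF fh I sj] .
    have F': "Fam' \<subseteq> Spec R" unfolding Fam'_def Spec_def using assms(8) by auto
    have U': "fst ` I \<subseteq> \<Union> Fam'"
    proof
      fix x assume "x \<in> fst ` I"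
      then obtain z where z: "z \<in> I" "x = fst z" by blast
      then obtain Q where Q: "Q \<in> Fam" "z \<in> Q" using U by blast
      then obtain \<alpha> where a: "\<alpha> \<in> \<Lambda>" "Q = amalg_prime S f J (p \<alpha>)" using F by blast
      have "x \<in> p \<alpha>" using Q a eq[OF a(1)] z by auto
      moreover have "p \<alpha> \<in> Fam'" unfolding Fam'_def using a Q by blast
      ultimately show "x \<in> \<Union> Fam'" by blast
    qed
    obtain Q' where Q': "Q' \<in> Fam'" "fst ` I \<subseteq> Q'"
      using cpR I0 F' U' unfolding compactly_packed_subset_def by blast
    then obtain \<alpha> where a: "\<alpha> \<in> \<Lambda>" "Q' = p \<alpha>" "amalg_prime S f J (p \<alpha>) \<in> Fam"
      unfolding Fam'_def by blast
    have "I \<subseteq> amalg_prime S f J (p \<alpha>)"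
      unfolding eq[OF a(1)] using Isub Q'(2) a(2) by auto
    then show "\<exists>Q\<in>Fam. I \<subseteq> Q" using a(3) by blast
  qed
qed

end
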